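(* If $K$ is a compact Collins–Roscoe space, then $K$ is monotonically Sokolov.
   Context: All spaces are Hausdorff. A family $\mathcal N$ of subsets of a space $T$ is an external network of $A\subset T$ in $T$ if for every $a\in A$ and every open $U\ni a$ there is $N\in\mathcal N$ with $a\in N\subset U$. A space $T$ is a Collins–Roscoe space if to each $x\in T$ one can assign a countable family $\mathcal O(x)$ of subsets of $T$ such that for every $A\subset T$, $\bigcup\{\mathcal O(x): x\in A\}$ is an external network of $\overline{A}$ in $T$. Let $X,Y$ be sets, $\mathcal O$ a family of subsets of $X$ closed under countable increasing unions, $\mathcal N$ a family of subsets of $Y$, and $f:\mathcal O\to\mathcal N$. Then $f$ is $\omega$-monotone if: (a) $f(A)$ is countable for every countable $A\in\mathcal O$; (b) $A\subset B$, $A,B\in\mathcal O$ imply $f(A)\subset f(B)$; (c) if $A_n\in\mathcal O$ and $A_n\subset A_{n+1}$ for all $n\in\omega$ then $f(\bigcup_n A_n)=\bigcup_n f(A_n)$. A space $T$ is monotonically Sokolov if to every countable family $\mathcal F$ of closed subsets of $T$ one can assign a continuous retraction $r_{\mathcal F}:T\to T$ and a countable external network $\mathcal N(\mathcal F)$ of $r_{\mathcal F}(T)$ in $T$ such that $r_{\mathcal F}(F)\subset F$ for every $F\in\mathcal F$ and the assignment $\mathcal F\mapsto\mathcal N(\mathcal F)$ is $\omega$-monotone. *)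

theory Defs
  imports "HOL-Analysis.Analysis"
begin

definition external_network :: "'a topology \<Rightarrow> 'a set set \<Rightarrow> 'a set \<Rightarrow> bool" where
  "external_network X NN A \<longleftrightarrow>
     NN \<subseteq> Pow (topspace X) \<and>
     (\<forall>a\<in>A. \<forall>U. openin X U \<and> a \<in> U \<longrightarrow> (\<exists>N\<in>NN. a \<in> N \<and> N \<subseteq> U))"

definition Collins_Roscoe :: "'a topology \<Rightarrow> bool" where
  "Collins_Roscoe X \<longleftrightarrow>
     (\<exists>Ob :: 'a \<Rightarrow> 'a set set.
        (\<forall>x\<in>topspace X. countable (Ob x) \<and> Ob x \<subseteq> Pow (topspace X)) \<and>
        (\<forall>A. A \<subseteq> topspace X \<longrightarrow>
              external_network X (\<Union>x\<in>A. Ob x) (X closure_of A)))"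

definition omega_monotone :: "'x set set \<Rightarrow> ('x set \<Rightarrow> 'y set) \<Rightarrow> bool" where
  "omega_monotone D f \<longleftrightarrow>
     (\<forall>A\<in>D. countable A \<longrightarrow> countable (f A)) \<and>
     (\<forall>A\<in>D. \<forall>B\<in>D. A \<subseteq> B \<longrightarrow> f A \<subseteq> f B) \<and>
     (\<forall>An :: nat \<Rightarrow> 'x set. (\<forall>n. An n \<in> D) \<and> (\<forall>n. An n \<subseteq> An (Suc n)) \<longrightarrow>
          f (\<Union>n. An n) = (\<Union>n. f (An n)))"

definition countable_closed_families :: "'a topology \<Rightarrow> 'a set set set" where
  "countable_closed_families X = {F. countable F \<and> (\<forall>S\<in>F. closedin X S)}"

definition monotonically_Sokolov :: "'a topology \<Rightarrow> bool" where
  "monotonically_Sokolov X \<longleftrightarrow>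
     (\<exists>(r :: 'a set set \<Rightarrow> 'a \<Rightarrow> 'a) (N :: 'a set set \<Rightarrow> 'a set set).
        (\<forall>F\<in>countable_closed_families X.
            continuous_map X X (r F) \<and>
            (\<forall>x\<in>topspace X. r F (r F x) = r F x) \<and>
            countable (N F) \<and>
            external_network X (N F) (r F ` topspace X) \<and>
            (\<forall>S\<in>F. r F ` S \<subseteq> S)) \<and>
        omega_monotone (countable_closed_families X) N)"

end

theory Submission
  imports Defs
begin


definition sepP :: "'a topology \<Rightarrow> 'a set \<Rightarrow> 'a set \<Rightarrow> 'a set \<times> 'a set" where
  "sepP K C1 C2 = (SOME p. openin K (fst p) \<and> openin K (snd p) \<and> C1 \<subseteq> fst p \<and> C2 \<subseteq> snd p
      \<and> K closure_of (fst p) \<inter> K closure_of (snd p) = {})"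

definition prs :: "'a topology \<Rightarrow> 'a set set \<Rightarrow> ('a set \<times> 'a set) set" where
  "prs K CC = (\<Union>c\<in>{c. fst c \<in> CC \<and> snd c \<in> CC \<and> fst c \<inter> snd c = {}}.
      {(topspace K - K closure_of fst (sepP K (fst c) (snd c)), fst (sepP K (fst c) (snd c))),
       (topspace K - K closure_of snd (sepP K (fst c) (snd c)), snd (sepP K (fst c) (snd c)))})"

definition cls :: "'a topology \<Rightarrow> ('a \<Rightarrow> 'a set set) \<Rightarrow> 'a set set \<Rightarrow> 'a set \<Rightarrow> 'a set set" where
  "cls K Ob F A = F \<union> (\<lambda>N. K closure_of N) ` (\<Union>a\<in>A. Ob a)"

definition wit :: "'a topology \<Rightarrow> ('a set \<times> 'a set) set \<Rightarrow> 'a set" where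
  "wit K P = (\<lambda>L. SOME z. z \<in> topspace K \<and> (\<forall>p\<in>L. z \<in> fst p)) `
      {L. finite L \<and> L \<subseteq> P \<and> (\<exists>z\<in>topspace K. \<forall>p\<in>L. z \<in> fst p)}"

primrec stage :: "'a topology \<Rightarrow> ('a \<Rightarrow> 'a set set) \<Rightarrow> 'a set set \<Rightarrow> nat \<Rightarrow> 'a set" where
  "stage K Ob F 0 = {}"
| "stage K Ob F (Suc n) = stage K Ob F n \<union> wit K (prs K (cls K Ob F (stage K Ob F n)))"

definition Apt :: "'a topology \<Rightarrow> ('a \<Rightarrow> 'a set set) \<Rightarrow> 'a set set \<Rightarrow> 'a set" where
  "Apt K Ob F = (\<Union>n. stage K Ob F n)"

lemma cls_mono: "F \<subseteq> G \<Longrightarrow> A \<subseteq> B \<Longrightarrow> cls K Ob F A \<subseteq> cls K Ob G B"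
  unfolding cls_def by blast

lemma prs_mono: "C \<subseteq> D \<Longrightarrow> prs K C \<subseteq> prs K D"
  unfolding prs_def by blast

lemma wit_mono: "P \<subseteq> Q \<Longrightarrow> wit K P \<subseteq> wit K Q"
  unfolding wit_def by blast

lemma stage_mono: assumes FG: "F \<subseteq> G" shows "stage K Ob F n \<subseteq> stage K Ob G n"
proof (induction n)
  case 0 then show ?case by simp
next
  case (Suc n)
  have "wit K (prs K (cls K Ob F (stage K Ob F n))) \<subseteq> wit K (prs K (cls K Ob G (stage K Ob G n)))"
    by (intro wit_mono prs_mono cls_mono Suc.IH FG)
  then show ?case using Suc.IH by auto
qed

lemma stage_inc: "incseq (stage K Ob F)"
  by (rule incseq_SucI) auto

lemma finite_in_chain:
  assumes "finite L" "L \<subseteq> (\<Union>n. P n)" "incseq P"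
  shows "\<exists>n. L \<subseteq> P n"
  using assms
proof (induction L rule: finite_induct)
  case empty then show ?case by simp
next
  case (insert x L)
  then obtain n where n: "L \<subseteq> P n" by auto
  obtain m where m: "x \<in> P m" using insert.prems by auto
  have "P n \<subseteq> P (max n m)" "P m \<subseteq> P (max n m)"
    by (rule incseqD[OF insert.prems(2)], simp)+
  then have "L \<subseteq> P (max n m)" "x \<in> P (max n m)" using n m by auto
  then show ?case by blast
qed

lemma cls_Un: "cls K Ob (\<Union>n. Fs n) (\<Union>n. As n) \<subseteq> (\<Union>n. cls K Ob (Fs n) (As n))"
  unfolding cls_def by blast

lemma prs_Un:
  assumes "incseq C"
  shows "prs K (\<Union>n. C n) \<subseteq> (\<Union>n. prs K (C n))"
proof
  fix p assume "p \<in> prs K (\<Union>n. C n)"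
  then obtain c where c: "fst c \<in> (\<Union>n. C n)" "snd c \<in> (\<Union>n. C n)" "fst c \<inter> snd c = {}"
    and p: "p \<in> {(topspace K - K closure_of fst (sepP K (fst c) (snd c)), fst (sepP K (fst c) (snd c))),
       (topspace K - K closure_of snd (sepP K (fst c) (snd c)), snd (sepP K (fst c) (snd c)))}"
    unfolding prs_def by blast
  obtain n m where "fst c \<in> C n" "snd c \<in> C m" using c by auto
  moreover have "C n \<subseteq> C (max n m)" "C m \<subseteq> C (max n m)"
    by (rule incseqD[OF assms], simp)+
  ultimately have "fst c \<in> C (max n m)" "snd c \<in> C (max n m)" by auto
  then have "p \<in> prs K (C (max n m))" using p c(3) unfolding prs_def by blast
  then show "p \<in> (\<Union>n. prs K (C n))" by blast
qed

lemma wit_Un: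
  assumes "incseq P"
  shows "wit K (\<Union>n. P n) \<subseteq> (\<Union>n. wit K (P n))"
proof
  fix z assume "z \<in> wit K (\<Union>n. P n)"
  then obtain L where L: "finite L" "L \<subseteq> (\<Union>n. P n)" "\<exists>z\<in>topspace K. \<forall>p\<in>L. z \<in> fst p"
     and z: "z = (SOME z. z \<in> topspace K \<and> (\<forall>p\<in>L. z \<in> fst p))"
    unfolding wit_def by blast
  obtain n where "L \<subseteq> P n" using finite_in_chain[OF L(1,2) assms] by blast
  then have "z \<in> wit K (P n)" using L z unfolding wit_def by blast
  then show "z \<in> (\<Union>n. wit K (P n))" by blast
qed

lemma step_Un:
  assumes "incseq Fs" "incseq As"
  shows "wit K (prs K (cls K Ob (\<Union>n. Fs n) (\<Union>n. As n))) \<subseteq> (\<Union>n. wit K (prs K (cls K Ob (Fs n) (As n))))"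
proof -
  let ?C = "\<lambda>n. cls K Ob (Fs n) (As n)"
  have ic: "incseq ?C" using assms cls_mono unfolding incseq_def by metis
  have ip: "incseq (\<lambda>n. prs K (?C n))" using ic prs_mono unfolding incseq_def by metis
  have "wit K (prs K (cls K Ob (\<Union>n. Fs n) (\<Union>n. As n))) \<subseteq> wit K (prs K (\<Union>n. ?C n))"
    by (intro wit_mono prs_mono cls_Un)
  also have "\<dots> \<subseteq> wit K (\<Union>n. prs K (?C n))"
    by (intro wit_mono prs_Un ic)
  also have "\<dots> \<subseteq> (\<Union>n. wit K (prs K (?C n)))" by (rule wit_Un[OF ip])
  finally show ?thesis .
qed

lemma stage_Un:
  assumes "incseq Fs"
  shows "stage K Ob (\<Union>n. Fs n) k = (\<Union>n. stage K Ob (Fs n) k)"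
proof (induction k)
  case 0 then show ?case by simp
next
  case (Suc k)
  have iA: "incseq (\<lambda>n. stage K Ob (Fs n) k)"
  proof (rule monoI)
    fix m n :: nat assume "m \<le> n"
    then show "stage K Ob (Fs m) k \<subseteq> stage K Ob (Fs n) k"
      by (intro stage_mono incseqD[OF assms])
  qed
  have 1: "wit K (prs K (cls K Ob (\<Union>n. Fs n) (\<Union>n. stage K Ob (Fs n) k)))
     \<subseteq> (\<Union>n. wit K (prs K (cls K Ob (Fs n) (stage K Ob (Fs n) k))))"
    by (rule step_Un[OF assms iA])
  have 2: "stage K Ob (\<Union>n. Fs n) (Suc k) = (\<Union>n. stage K Ob (Fs n) k) \<union>
     wit K (prs K (cls K Ob (\<Union>n. Fs n) (\<Union>n. stage K Ob (Fs n) k)))"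
    using Suc.IH by simp
  have 3: "stage K Ob (Fs n) (Suc k) = stage K Ob (Fs n) k \<union> wit K (prs K (cls K Ob (Fs n) (stage K Ob (Fs n) k)))" for n
    by simp
  have "stage K Ob (\<Union>n. Fs n) (Suc k) \<subseteq> (\<Union>n. stage K Ob (Fs n) (Suc k))"
    unfolding 2 3 using 1 by blast
  moreover have "stage K Ob (Fs n) (Suc k) \<subseteq> stage K Ob (\<Union>n. Fs n) (Suc k)" for n
    by (rule stage_mono) auto
  ultimately show ?case by blast
qed

lemma Apt_mono: assumes "F \<subseteq> G" shows "Apt K Ob F \<subseteq> Apt K Ob G"
  unfolding Apt_def using stage_mono[OF assms, of K Ob] by (simp add: SUP_mono')

lemma Apt_Un: assumes "incseq Fs" shows "Apt K Ob (\<Union>n. Fs n) = (\<Union>n. Apt K Ob (Fs n))"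
  unfolding Apt_def stage_Un[OF assms] by (rule SUP_commute)

lemma Apt_closed: "wit K (prs K (cls K Ob F (Apt K Ob F))) \<subseteq> Apt K Ob F"
proof -
  have ic: "incseq (\<lambda>n::nat. F)" by (simp add: incseq_def)
  have "wit K (prs K (cls K Ob F (Apt K Ob F))) \<subseteq> (\<Union>n. wit K (prs K (cls K Ob F (stage K Ob F n))))"
  proof -
    have ia: "incseq (stage K Ob F)" by (rule stage_inc)
    have 1: "wit K (prs K (cls K Ob (\<Union>n::nat. F) (\<Union>n. stage K Ob F n))) \<subseteq> (\<Union>n. wit K (prs K (cls K Ob F (stage K Ob F n))))"
      by (rule step_Un[OF ic ia])
    have e: "(\<Union>n::nat. F) = F" by simp
    show ?thesis using 1 unfolding e Apt_def by assumption
  qed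
  also have "\<dots> \<subseteq> Apt K Ob F"
  proof (rule UN_least)
    fix n
    have "wit K (prs K (cls K Ob F (stage K Ob F n))) \<subseteq> stage K Ob F (Suc n)" by simp
    then show "wit K (prs K (cls K Ob F (stage K Ob F n))) \<subseteq> Apt K Ob F"
      unfolding Apt_def by blast
  qed
  finally show ?thesis .
qed



definition Rel :: "'a topology \<Rightarrow> ('a \<Rightarrow> 'a set set) \<Rightarrow> 'a set set \<Rightarrow> 'a \<Rightarrow> 'a \<Rightarrow> bool" where
  "Rel K Ob F y m \<longleftrightarrow> m \<in> K closure_of (Apt K Ob F) \<and>
     (\<forall>p\<in>prs K (cls K Ob F (Apt K Ob F)). y \<in> fst p \<longrightarrow> m \<notin> snd p)"

definition rr :: "'a topology \<Rightarrow> ('a \<Rightarrow> 'a set set) \<Rightarrow> 'a set set \<Rightarrow> 'a \<Rightarrow> 'a" where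
  "rr K Ob F y = (if y \<in> topspace K then (SOME m. Rel K Ob F y m) else y)"

lemma wit_sub: "wit K P \<subseteq> topspace K"
proof
  fix z assume "z \<in> wit K P"
  then obtain L where L: "L \<in> {L. finite L \<and> L \<subseteq> P \<and> (\<exists>z\<in>topspace K. \<forall>p\<in>L. z \<in> fst p)}"
     and z: "z = (SOME z. z \<in> topspace K \<and> (\<forall>p\<in>L. z \<in> fst p))"
    unfolding wit_def by (rule imageE)
  from L have ex: "\<exists>z. z \<in> topspace K \<and> (\<forall>p\<in>L. z \<in> fst p)" by blast
  show "z \<in> topspace K" using someI_ex[OF ex] unfolding z by blast
qed

lemma wit_countable:
  assumes "countable P" shows "countable (wit K P)"
proof -
  have "countable {L. finite L \<and> L \<subseteq> P}" by (rule countable_Collect_finite_subset[OF assms])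
  then have "countable {L. finite L \<and> L \<subseteq> P \<and> (\<exists>z\<in>topspace K. \<forall>p\<in>L. z \<in> fst p)}"
    by (rule countable_subset[rotated]) blast
  then show ?thesis unfolding wit_def by (rule countable_image)
qed

lemma prs_countable:
  assumes "countable CC" shows "countable (prs K CC)"
proof -
  have "countable (CC \<times> CC)" using assms by (simp add: countable_SIGMA)
  then have c: "countable {c. fst c \<in> CC \<and> snd c \<in> CC \<and> fst c \<inter> snd c = {}}"
    by (rule countable_subset[rotated]) (auto simp: mem_Times_iff)
  show ?thesis unfolding prs_def
    by (rule countable_UN[OF c]) simp
qed

lemma stage_sub: "stage K Ob F n \<subseteq> topspace K"
  by (induction n) (simp_all add: wit_sub)

lemma Apt_sub: "Apt K Ob F \<subseteq> topspace K"
  unfolding Apt_def by (simp add: UN_least stage_sub)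

lemma stage_countable:
  assumes "countable F" "\<forall>x\<in>topspace K. countable (Ob x)"
  shows "countable (stage K Ob F n)"
proof (induction n)
  case 0 then show ?case by simp
next
  case (Suc n)
  have "countable (\<Union>a\<in>stage K Ob F n. Ob a)"
  proof (rule countable_UN[OF Suc])
    fix a assume "a \<in> stage K Ob F n"
    then show "countable (Ob a)" using assms(2) stage_sub[of K Ob F n] by blast
  qed
  then have "countable (cls K Ob F (stage K Ob F n))"
    unfolding cls_def using assms(1) by simp
  then show ?case using Suc by (simp add: wit_countable prs_countable)
qed

lemma Apt_countable:
  assumes "countable F" "\<forall>x\<in>topspace K. countable (Ob x)"
  shows "countable (Apt K Ob F)"
  unfolding Apt_def using stage_countable[OF assms] by blast

context
  fixes K :: "'a topology" and Ob :: "'a \<Rightarrow> 'a set set"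
  assumes H: "Hausdorff_space K" and CK: "compact_space K"
    and Obc: "\<forall>x\<in>topspace K. countable (Ob x) \<and> Ob x \<subseteq> Pow (topspace K)"
    and EN: "\<forall>A. A \<subseteq> topspace K \<longrightarrow> external_network K (\<Union>x\<in>A. Ob x) (K closure_of A)"
begin

lemma sepP_props:
  assumes "closedin K C1" "closedin K C2" "C1 \<inter> C2 = {}"
  shows "openin K (fst (sepP K C1 C2)) \<and> openin K (snd (sepP K C1 C2)) \<and> C1 \<subseteq> fst (sepP K C1 C2)
     \<and> C2 \<subseteq> snd (sepP K C1 C2) \<and> K closure_of (fst (sepP K C1 C2)) \<inter> K closure_of (snd (sepP K C1 C2)) = {}"
proof -
  have N: "normal_space K" using CK H compact_Hausdorff_or_regular_imp_normal_space by blast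
  have "\<exists>U V. openin K U \<and> openin K V \<and> C1 \<subseteq> U \<and> C2 \<subseteq> V \<and> disjnt U V"
    using N assms unfolding normal_space_def disjnt_def by simp
  then obtain U V where UV: "openin K U" "openin K V" "C1 \<subseteq> U" "C2 \<subseteq> V" "disjnt U V"
    by blast
  have "\<exists>V1. openin K V1 \<and> C1 \<subseteq> V1 \<and> K closure_of V1 \<subseteq> U"
    using N assms(1) UV(1,3) unfolding normal_space_alt by simp
  then obtain V1 where V1: "openin K V1" "C1 \<subseteq> V1" "K closure_of V1 \<subseteq> U" by blast
  have "\<exists>V2. openin K V2 \<and> C2 \<subseteq> V2 \<and> K closure_of V2 \<subseteq> V"
    using N assms(2) UV(2,4) unfolding normal_space_alt by simp
  then obtain V2 where V2: "openin K V2" "C2 \<subseteq> V2" "K closure_of V2 \<subseteq> V" by blast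
  have d: "K closure_of V1 \<inter> K closure_of V2 = {}" using V1(3) V2(3) UV(5) unfolding disjnt_def by blast
  have "\<exists>p. openin K (fst p) \<and> openin K (snd p) \<and> C1 \<subseteq> fst p \<and> C2 \<subseteq> snd p
      \<and> K closure_of (fst p) \<inter> K closure_of (snd p) = {}"
    by (rule exI[of _ "(V1,V2)"]) (simp add: V1 V2 d)
  then show ?thesis unfolding sepP_def by (rule someI_ex)
qed

lemma prs_intro:
  assumes "C1 \<in> CC" "C2 \<in> CC" "C1 \<inter> C2 = {}"
  shows "(topspace K - K closure_of fst (sepP K C1 C2), fst (sepP K C1 C2)) \<in> prs K CC"
    "(topspace K - K closure_of snd (sepP K C1 C2), snd (sepP K C1 C2)) \<in> prs K CC"
  unfolding prs_def by (rule UN_I[of "(C1,C2)"], simp add: assms, simp)+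

lemma prs_E:
  assumes "p \<in> prs K CC"
  obtains C1 C2 where "C1 \<in> CC" "C2 \<in> CC" "C1 \<inter> C2 = {}"
    "p = (topspace K - K closure_of fst (sepP K C1 C2), fst (sepP K C1 C2)) \<or>
     p = (topspace K - K closure_of snd (sepP K C1 C2), snd (sepP K C1 C2))"
proof -
  obtain c where c: "c \<in> {c. fst c \<in> CC \<and> snd c \<in> CC \<and> fst c \<inter> snd c = {}}"
    "p \<in> {(topspace K - K closure_of fst (sepP K (fst c) (snd c)), fst (sepP K (fst c) (snd c))),
       (topspace K - K closure_of snd (sepP K (fst c) (snd c)), snd (sepP K (fst c) (snd c)))}"
    using assms unfolding prs_def by (rule UN_E)
  show ?thesis by (rule that[of "fst c" "snd c"]) (use c in auto)
qed

lemma prs_disj: "p \<in> prs K CC \<Longrightarrow> fst p \<inter> snd p = {}"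
proof (erule prs_E)
  fix C1 C2
  assume "p = (topspace K - K closure_of fst (sepP K C1 C2), fst (sepP K C1 C2)) \<or>
     p = (topspace K - K closure_of snd (sepP K C1 C2), snd (sepP K C1 C2))"
  then show "fst p \<inter> snd p = {}"
    using closure_of_subset_Int[of K "fst (sepP K C1 C2)"] closure_of_subset_Int[of K "snd (sepP K C1 C2)"]
    by auto
qed

lemma prs_open:
  assumes "\<forall>C\<in>CC. closedin K C" "p \<in> prs K CC"
  shows "openin K (fst p) \<and> openin K (snd p)"
  using assms(2)
proof (rule prs_E)
  fix C1 C2
  assume C: "C1 \<in> CC" "C2 \<in> CC" "C1 \<inter> C2 = {}" and
    p: "p = (topspace K - K closure_of fst (sepP K C1 C2), fst (sepP K C1 C2)) \<or>
     p = (topspace K - K closure_of snd (sepP K C1 C2), snd (sepP K C1 C2))"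
  have o: "openin K (fst (sepP K C1 C2))" "openin K (snd (sepP K C1 C2))"
    using sepP_props[of C1 C2] C assms(1) by auto
  show ?thesis using p o by (auto intro!: openin_diff)
qed

lemma cls_closed: "\<forall>S\<in>F. closedin K S \<Longrightarrow> \<forall>C\<in>cls K Ob F A. closedin K C"
  unfolding cls_def by (auto simp: closedin_closure_of)

lemma net:
  assumes "m \<in> K closure_of Apt K Ob F" "openin K W" "m \<in> W"
  obtains N where "N \<in> cls K Ob F (Apt K Ob F)" "m \<in> N" "N \<subseteq> K closure_of W"
proof -
  have "external_network K (\<Union>x\<in>Apt K Ob F. Ob x) (K closure_of Apt K Ob F)"
    using EN Apt_sub[of K Ob F] by simp
  then have "\<forall>U. openin K U \<and> m \<in> U \<longrightarrow> (\<exists>N\<in>(\<Union>x\<in>Apt K Ob F. Ob x). m \<in> N \<and> N \<subseteq> U)"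
    using assms(1) unfolding external_network_def by blast
  then obtain N0 where N0: "N0 \<in> (\<Union>x\<in>Apt K Ob F. Ob x)" "m \<in> N0" "N0 \<subseteq> W"
    using assms(2,3) by blast
  then obtain a where a: "a \<in> Apt K Ob F" "N0 \<in> Ob a" by blast
  note a = a N0(2,3)
  have "a \<in> topspace K" using a(1) Apt_sub[of K Ob F] by blast
  then have "N0 \<subseteq> topspace K" using a(2) Obc by blast
  then have "m \<in> K closure_of N0" using a(3) closure_of_subset[of N0 K] by blast
  moreover have "K closure_of N0 \<subseteq> K closure_of W" using a(4) by (rule closure_of_mono)
  moreover have "K closure_of N0 \<in> cls K Ob F (Apt K Ob F)" using a(1,2) unfolding cls_def by blast
  ultimately show ?thesis using that by blast
qed

context
  fixes F assumes Fc: "\<forall>S\<in>F. closedin K S"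
begin

lemma Rel_refl: "m \<in> K closure_of Apt K Ob F \<Longrightarrow> Rel K Ob F m m"
  unfolding Rel_def using prs_disj by blast

lemma Rel_ex:
  assumes y: "y \<in> topspace K"
  shows "\<exists>m. Rel K Ob F y m"
proof -
  let ?A = "Apt K Ob F"
  let ?M = "K closure_of ?A"
  let ?P = "prs K (cls K Ob F ?A)"
  let ?U = "(\<lambda>p. topspace K - snd p) ` {p\<in>?P. y \<in> fst p}"
  have cM: "compactin K ?M" by (rule closedin_compact_space[OF CK]) simp
  have "?M \<inter> \<Inter>?U \<noteq> {}"
  proof (rule cM[unfolded compactin_fip, THEN conjunct2, rule_format], intro conjI allI impI)
    show "\<forall>C\<in>?U. closedin K C"
      using prs_open[OF cls_closed[OF Fc]] by (auto intro!: closedin_diff)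
    fix FF assume FF: "finite FF \<and> FF \<subseteq> ?U"
    then obtain L where L: "finite L" "L \<subseteq> {p\<in>?P. y \<in> fst p}" "FF = (\<lambda>p. topspace K - snd p) ` L"
      by (meson finite_subset_image)
    let ?z = "SOME z. z \<in> topspace K \<and> (\<forall>p\<in>L. z \<in> fst p)"
    have ex: "\<exists>z\<in>topspace K. \<forall>p\<in>L. z \<in> fst p" using L y by blast
    have "?z \<in> wit K ?P" unfolding wit_def
    proof (rule image_eqI[where x = L])
      show "L \<in> {L. finite L \<and> L \<subseteq> ?P \<and> (\<exists>z\<in>topspace K. \<forall>p\<in>L. z \<in> fst p)}"
        using L(1,2) ex by blast
    qed simp
    then have zA: "?z \<in> ?A" using Apt_closed[of K Ob F] by blast
    have z: "?z \<in> topspace K \<and> (\<forall>p\<in>L. ?z \<in> fst p)"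
      using someI_ex[of "\<lambda>z. z \<in> topspace K \<and> (\<forall>p\<in>L. z \<in> fst p)"] ex by blast
    have "?z \<in> ?M" using zA closure_of_subset[OF Apt_sub[of K Ob F]] by blast
    moreover have "?z \<in> \<Inter>FF"
    proof -
      have "\<forall>p\<in>L. ?z \<notin> snd p" using L(2) z prs_disj[of _ "cls K Ob F ?A"] by blast
      then show ?thesis using L(3) z by blast
    qed
    ultimately show "?M \<inter> \<Inter>FF \<noteq> {}" by blast
  qed
  then obtain m where "m \<in> ?M" "m \<in> \<Inter>?U" by blast
  then have "Rel K Ob F y m" unfolding Rel_def by blast
  then show ?thesis by blast
qed

lemma Rel_unique:
  assumes y: "y \<in> topspace K" and R1: "Rel K Ob F y m" and R2: "Rel K Ob F y m'"
  shows "m = m'"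
proof (rule ccontr)
  assume ne: "m \<noteq> m'"
  let ?A = "Apt K Ob F"
  let ?M = "K closure_of ?A"
  have mM: "m \<in> ?M" "m' \<in> ?M" using R1 R2 unfolding Rel_def by auto
  then have mt: "m \<in> topspace K" "m' \<in> topspace K" using closure_of_subset_topspace[of K] by blast+
  define W where "W = sepP K {m} {m'}"
  have W: "openin K (fst W) \<and> openin K (snd W) \<and> {m} \<subseteq> fst W \<and> {m'} \<subseteq> snd W
     \<and> K closure_of (fst W) \<inter> K closure_of (snd W) = {}"
    unfolding W_def by (rule sepP_props) (use ne mt closedin_Hausdorff_singleton[OF H] in auto)
  obtain N where N: "N \<in> cls K Ob F ?A" "m \<in> N" "N \<subseteq> K closure_of fst W"
    using net[OF mM(1)] W by blast
  obtain N' where N': "N' \<in> cls K Ob F ?A" "m' \<in> N'" "N' \<subseteq> K closure_of snd W"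
    using net[OF mM(2)] W by blast
  have d: "N \<inter> N' = {}" using N N' W by blast
  have cN: "closedin K N" "closedin K N'" using N N' cls_closed[OF Fc] by auto
  define V where "V = sepP K N N'"
  have V: "openin K (fst V) \<and> openin K (snd V) \<and> N \<subseteq> fst V \<and> N' \<subseteq> snd V
     \<and> K closure_of (fst V) \<inter> K closure_of (snd V) = {}"
    unfolding V_def by (rule sepP_props[OF cN d])
  have p1: "(topspace K - K closure_of fst V, fst V) \<in> prs K (cls K Ob F ?A)"
    and p2: "(topspace K - K closure_of snd V, snd V) \<in> prs K (cls K Ob F ?A)"
    unfolding V_def by (rule prs_intro[OF N(1) N'(1) d])+
  show False
  proof (cases "y \<in> K closure_of fst V")
    case True
    then have "y \<notin> K closure_of snd V" using V by blast
    then show False using R2 p2 y N'(2) V unfolding Rel_def by fastforce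
  next
    case False
    then show False using R1 p1 y N(2) V unfolding Rel_def by fastforce
  qed
qed

lemma Rel_sub:
  assumes S: "S \<in> F" and y: "y \<in> S" and R: "Rel K Ob F y m"
  shows "m \<in> S"
proof (rule ccontr)
  assume ne: "m \<notin> S"
  let ?A = "Apt K Ob F"
  let ?M = "K closure_of ?A"
  have mM: "m \<in> ?M" using R unfolding Rel_def by auto
  then have mt: "m \<in> topspace K" using closure_of_subset_topspace[of K] by blast
  have cS: "closedin K S" using Fc S by blast
  then have yt: "y \<in> topspace K" using y closedin_subset[OF cS] by blast
  define W where "W = sepP K {m} S"
  have W: "openin K (fst W) \<and> openin K (snd W) \<and> {m} \<subseteq> fst W \<and> S \<subseteq> snd W
     \<and> K closure_of (fst W) \<inter> K closure_of (snd W) = {}"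
    unfolding W_def by (rule sepP_props) (use ne mt cS closedin_Hausdorff_singleton[OF H] in auto)
  obtain N where N: "N \<in> cls K Ob F ?A" "m \<in> N" "N \<subseteq> K closure_of fst W"
    using net[OF mM] W by blast
  have "snd W \<subseteq> topspace K" using W openin_subset by blast
  then have "snd W \<subseteq> K closure_of snd W" by (rule closure_of_subset)
  then have "S \<subseteq> K closure_of snd W" using W by blast
  then have d: "N \<inter> S = {}" using N W by blast
  have SC: "S \<in> cls K Ob F ?A" using S unfolding cls_def by blast
  have cN: "closedin K N" using N cls_closed[OF Fc] by auto
  define V where "V = sepP K N S"
  have V: "openin K (fst V) \<and> openin K (snd V) \<and> N \<subseteq> fst V \<and> S \<subseteq> snd V
     \<and> K closure_of (fst V) \<inter> K closure_of (snd V) = {}"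
    unfolding V_def by (rule sepP_props[OF cN cS d])
  have p1: "(topspace K - K closure_of fst V, fst V) \<in> prs K (cls K Ob F ?A)"
    unfolding V_def by (rule prs_intro[OF N(1) SC d])
  have "snd V \<subseteq> topspace K" using V openin_subset by blast
  then have "snd V \<subseteq> K closure_of snd V" by (rule closure_of_subset)
  then have "y \<in> K closure_of snd V" using y V by blast
  then have "y \<notin> K closure_of fst V" using V by blast
  then have y1: "y \<in> topspace K - K closure_of fst V" using yt by blast
  have "\<forall>p\<in>prs K (cls K Ob F ?A). y \<in> fst p \<longrightarrow> m \<notin> snd p" using R unfolding Rel_def by blast
  then have "m \<notin> fst V" using p1 y1 by fastforce
  then show False using N(2) V by blast
qed

lemma rr_Rel: "y \<in> topspace K \<Longrightarrow> Rel K Ob F y (rr K Ob F y)"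
  unfolding rr_def using someI_ex[OF Rel_ex] by simp

lemma rr_eq: "y \<in> topspace K \<Longrightarrow> Rel K Ob F y m \<Longrightarrow> rr K Ob F y = m"
  using rr_Rel Rel_unique by blast

lemma rr_M: "y \<in> topspace K \<Longrightarrow> rr K Ob F y \<in> K closure_of Apt K Ob F"
  using rr_Rel unfolding Rel_def by blast

lemma rr_top: "y \<in> topspace K \<Longrightarrow> rr K Ob F y \<in> topspace K"
  using rr_M closure_of_subset_topspace[of K] by blast

lemma rr_idem: "y \<in> topspace K \<Longrightarrow> rr K Ob F (rr K Ob F y) = rr K Ob F y"
  by (rule rr_eq[OF rr_top Rel_refl[OF rr_M]])

lemma rr_sub: assumes S: "S \<in> F" shows "rr K Ob F ` S \<subseteq> S"
proof
  fix x assume "x \<in> rr K Ob F ` S"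
  then obtain y where y: "y \<in> S" "x = rr K Ob F y" by blast
  have "S \<subseteq> topspace K" using Fc S closedin_subset by blast
  then have "Rel K Ob F y (rr K Ob F y)" using y(1) rr_Rel by blast
  then show "x \<in> S" using Rel_sub[OF S y(1)] y(2) by simp
qed

lemma rr_cont: "continuous_map K K (rr K Ob F)"
proof -
  let ?A = "Apt K Ob F"
  let ?M = "K closure_of ?A"
  let ?P = "prs K (cls K Ob F ?A)"
  define G where "G = \<Inter>({topspace K \<times> ?M} \<union> (\<lambda>p. topspace K \<times> topspace K - fst p \<times> snd p) ` ?P)"
  have opP: "openin K (fst p) \<and> openin K (snd p)" if "p \<in> ?P" for p
    using prs_open[OF cls_closed[OF Fc] that] .
  have cG: "closedin (prod_topology K K) G"
    unfolding G_def
  proof (rule closedin_Inter)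
    fix X assume "X \<in> {topspace K \<times> ?M} \<union> (\<lambda>p. topspace K \<times> topspace K - fst p \<times> snd p) ` ?P"
    then show "closedin (prod_topology K K) X"
    proof
      assume "X \<in> {topspace K \<times> ?M}"
      then show ?thesis by (simp add: closedin_prod_Times_iff)
    next
      assume "X \<in> (\<lambda>p. topspace K \<times> topspace K - fst p \<times> snd p) ` ?P"
      then obtain p where p: "p \<in> ?P" "X = topspace K \<times> topspace K - fst p \<times> snd p" by blast
      have "openin (prod_topology K K) (fst p \<times> snd p)" using opP[OF p(1)] by (simp add: openin_prod_Times_iff)
      then show ?thesis using p(2) by (metis closedin_diff closedin_topspace topspace_prod_topology)
    qed
  qed auto
  have Geq: "G = {(y,m). y \<in> topspace K \<and> Rel K Ob F y m}"
  proof
    show "G \<subseteq> {(y,m). y \<in> topspace K \<and> Rel K Ob F y m}"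
    proof
      fix q assume q: "q \<in> G"
      obtain y m where ym: "q = (y,m)" by fastforce
      have "y \<in> topspace K" "m \<in> ?M" using q ym unfolding G_def by auto
      moreover have "\<forall>p\<in>?P. y \<in> fst p \<longrightarrow> m \<notin> snd p"
      proof (intro ballI impI)
        fix p assume "p \<in> ?P" "y \<in> fst p"
        then have "q \<notin> fst p \<times> snd p" if "q \<in> topspace K \<times> topspace K - fst p \<times> snd p"
          using that by blast
        moreover have "q \<in> topspace K \<times> topspace K - fst p \<times> snd p"
          using q \<open>p \<in> ?P\<close> unfolding G_def by blast
        ultimately show "m \<notin> snd p" using ym \<open>y \<in> fst p\<close> by blast
      qed
      ultimately show "q \<in> {(y,m). y \<in> topspace K \<and> Rel K Ob F y m}"
        unfolding Rel_def ym by blast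
    qed
    show "{(y,m). y \<in> topspace K \<and> Rel K Ob F y m} \<subseteq> G"
    proof
      fix q assume q: "q \<in> {(y,m). y \<in> topspace K \<and> Rel K Ob F y m}"
      obtain y m where ym: "q = (y,m)" by fastforce
      have y: "y \<in> topspace K" and R: "Rel K Ob F y m" using q ym by auto
      have mM: "m \<in> ?M" using R unfolding Rel_def by blast
      have mt: "m \<in> topspace K" using mM closure_of_subset_topspace[of K] by blast
      have "\<forall>p\<in>?P. y \<in> fst p \<longrightarrow> m \<notin> snd p" using R unfolding Rel_def by blast
      then show "q \<in> G" unfolding G_def ym using y mM mt by blast
    qed
  qed
  show ?thesis
    unfolding continuous_map_closedin
  proof (intro conjI allI impI)
    show "rr K Ob F \<in> topspace K \<rightarrow> topspace K" using rr_top by blast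
    fix C assume C: "closedin K C"
    have eq: "{x \<in> topspace K. rr K Ob F x \<in> C} = fst ` (G \<inter> (topspace K \<times> C))"
    proof
      show "{x \<in> topspace K. rr K Ob F x \<in> C} \<subseteq> fst ` (G \<inter> (topspace K \<times> C))"
      proof
        fix x assume x: "x \<in> {x \<in> topspace K. rr K Ob F x \<in> C}"
        then have "(x, rr K Ob F x) \<in> G \<inter> (topspace K \<times> C)" using Geq rr_Rel by auto
        then show "x \<in> fst ` (G \<inter> (topspace K \<times> C))" by force
      qed
      show "fst ` (G \<inter> (topspace K \<times> C)) \<subseteq> {x \<in> topspace K. rr K Ob F x \<in> C}"
        using Geq rr_eq by auto
    qed
    have "closedin (prod_topology K K) (G \<inter> (topspace K \<times> C))"
      using cG C by (simp add: closedin_Int closedin_prod_Times_iff)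
    then show "closedin K {x \<in> topspace K. rr K Ob F x \<in> C}"
      unfolding eq using closed_map_fst[OF CK] unfolding closed_map_def by blast
  qed
qed

end
end



theorem corollary1p2:
  fixes K :: "'a topology"
  assumes "Hausdorff_space K" and "compact_space K" and "Collins_Roscoe K"
  shows "monotonically_Sokolov K"
proof -
  obtain Ob :: "'a \<Rightarrow> 'a set set" where
    Obc: "\<forall>x\<in>topspace K. countable (Ob x) \<and> Ob x \<subseteq> Pow (topspace K)" and
    EN: "\<forall>A. A \<subseteq> topspace K \<longrightarrow> external_network K (\<Union>x\<in>A. Ob x) (K closure_of A)"
    using assms(3) unfolding Collins_Roscoe_def by (elim exE conjE) blast
  define NN where "NN = (\<lambda>F. \<Union>a\<in>Apt K Ob F. Ob a)"
  have Obc': "\<forall>x\<in>topspace K. countable (Ob x)" using Obc by blast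
  have cNN: "countable (NN F)" if "countable F" for F
    unfolding NN_def
  proof (rule countable_UN[OF Apt_countable[OF that Obc']])
    fix a assume "a \<in> Apt K Ob F"
    then have "a \<in> topspace K" using Apt_sub[of K Ob F] by blast
    then show "countable (Ob a)" using Obc' by blast
  qed
  have part1: "continuous_map K K (rr K Ob F) \<and>
            (\<forall>x\<in>topspace K. rr K Ob F (rr K Ob F x) = rr K Ob F x) \<and>
            countable (NN F) \<and>
            external_network K (NN F) (rr K Ob F ` topspace K) \<and>
            (\<forall>S\<in>F. rr K Ob F ` S \<subseteq> S)"
    if F: "F \<in> countable_closed_families K" for F
  proof -
    have Fc: "\<forall>S\<in>F. closedin K S" "countable F" using F unfolding countable_closed_families_def by auto
    have "external_network K (NN F) (rr K Ob F ` topspace K)"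
    proof -
      have "external_network K (NN F) (K closure_of Apt K Ob F)"
        unfolding NN_def using EN Apt_sub[of K Ob F] by simp
      moreover have "rr K Ob F ` topspace K \<subseteq> K closure_of Apt K Ob F"
        using rr_M[OF assms(1,2) Obc EN Fc(1)] by blast
      ultimately show ?thesis unfolding external_network_def by (meson subsetD)
    qed
    moreover have "\<forall>x\<in>topspace K. rr K Ob F (rr K Ob F x) = rr K Ob F x"
      using rr_idem[OF assms(1,2) Obc EN Fc(1)] by blast
    moreover have "\<forall>S\<in>F. rr K Ob F ` S \<subseteq> S"
      using rr_sub[OF assms(1,2) Obc EN Fc(1)] by blast
    ultimately show ?thesis
      using rr_cont[OF assms(1,2) Obc EN Fc(1)] cNN[OF Fc(2)] by blast
  qed
  have om: "omega_monotone (countable_closed_families K) NN"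
    unfolding omega_monotone_def
  proof (intro conjI ballI allI impI)
    fix A :: "'a set set" assume "A \<in> countable_closed_families K" "countable A"
    then show "countable (NN A)" using cNN by blast
  next
    fix A B :: "'a set set" assume "A \<subseteq> B"
    then have "Apt K Ob A \<subseteq> Apt K Ob B" by (rule Apt_mono)
    then show "NN A \<subseteq> NN B" unfolding NN_def by (rule UN_mono) simp
  next
    fix An :: "nat \<Rightarrow> 'a set set"
    assume "(\<forall>n. An n \<in> countable_closed_families K) \<and> (\<forall>n. An n \<subseteq> An (Suc n))"
    then have "incseq An" by (simp add: incseq_SucI)
    then have "Apt K Ob (\<Union>n. An n) = (\<Union>n. Apt K Ob (An n))" by (rule Apt_Un)
    then show "NN (\<Union>n. An n) = (\<Union>n. NN (An n))" unfolding NN_def by (simp add: UN_UN_flatten)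
  qed
  show ?thesis unfolding monotonically_Sokolov_def
  proof (rule exI[of _ "rr K Ob"], rule exI[of _ NN], rule conjI)
    show "\<forall>F\<in>countable_closed_families K.
            continuous_map K K (rr K Ob F) \<and>
            (\<forall>x\<in>topspace K. rr K Ob F (rr K Ob F x) = rr K Ob F x) \<and>
            countable (NN F) \<and>
            external_network K (NN F) (rr K Ob F ` topspace K) \<and>
            (\<forall>S\<in>F. rr K Ob F ` S \<subseteq> S)" using part1 by blast
    show "omega_monotone (countable_closed_families K) NN" by (rule om)
  qed
qed


end
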